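(* Let $K$ be a virtual knot with classical crossing number $c(K)=n$, and suppose $K$ has a Gauss code $\omega_K$ (coming from a diagram of $K$ with $n$ classical crossings) with $M(\omega_K)=n$. Then $n=\tau(K)=\rho(K)$.
   Context: Mosaic tiles are the eleven standard unit-square tiles $T_0,\dots,T_{10}$ ($T_0$ blank; $T_1,\dots,T_8$ non-crossing tiles with one or two arcs; $T_9,T_{10}$ the two crossing tiles, each containing a horizontal and a vertical strand crossing at the center). A virtual rectangular mosaic is an $m\times n$ array of tiles together with a pairing of the $2(m+n)$ boundary unit edges whose quotient is a closed orientable surface carrying a knot diagram; it represents a virtual knot. A row mosaic is a $1\times n$ virtual rectangular mosaic. The tile number $\tau(K)$ is the minimal number of tiles of a virtual rectangular mosaic representing $K$; the row number $\rho(K)$ is the minimal $n$ such that $K$ is represented by a $1\times n$ row mosaic. The classical crossing number $c(K)$ is the minimal number of classical crossings in a virtual diagram of $K$. A Gauss code of a diagram with classical crossings labeled $1,\dots,n$ is the cyclic sequence of length $2n$ recording, while traversing the knot, each classical crossing passed (with over/under and sign information). $M(\omega_K)$ denotes the length of a longest consecutive subsequence of $\omega_K$ in which no crossing label appears twice. *)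

theory Defs
  imports Main
begin

text \<open>A Gauss code entry is (crossing label, is_over, sign_is_positive).
  A Gauss code is a list, read cyclically.\<close>

type_synonym gentry = "nat \<times> bool \<times> bool"
type_synonym gcode = "gentry list"

definition valid_gc :: "gcode \<Rightarrow> bool" where
  "valid_gc w \<longleftrightarrow> (\<forall>l \<in> fst ` set w. \<exists>s.
      filter (\<lambda>e. fst e = l) w \<in> {[(l, True, s), (l, False, s)], [(l, False, s), (l, True, s)]})"

definition labels :: "gcode \<Rightarrow> nat set" where
  "labels w = fst ` set w"

text \<open>R3 segments: top strand (over at x and y), middle strand (under at x, over at z),
  bottom strand (under at y and z).  The boolean says whether the strand meets the
  crossings in the listed order.\<close>

definition segT :: "bool \<Rightarrow> nat \<Rightarrow> nat \<Rightarrow> bool \<Rightarrow> bool \<Rightarrow> gcode" where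
  "segT t x y sx sy = (if t then [(x, True, sx), (y, True, sy)] else [(y, True, sy), (x, True, sx)])"

definition segM :: "bool \<Rightarrow> nat \<Rightarrow> nat \<Rightarrow> bool \<Rightarrow> bool \<Rightarrow> gcode" where
  "segM m x z sx sz = (if m then [(x, False, sx), (z, True, sz)] else [(z, True, sz), (x, False, sx)])"

definition segB :: "bool \<Rightarrow> nat \<Rightarrow> nat \<Rightarrow> bool \<Rightarrow> bool \<Rightarrow> gcode" where
  "segB b y z sy sz = (if b then [(y, False, sy), (z, False, sz)] else [(z, False, sz), (y, False, sy)])"

inductive vmove :: "gcode \<Rightarrow> gcode \<Rightarrow> bool" where
  rot: "vmove w (rotate k w)"
| relabel: "inj f \<Longrightarrow> vmove w (map (\<lambda>(l, ov, s). (f l, ov, s)) w)"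
| R1: "i \<notin> labels (u @ v) \<Longrightarrow> vmove (u @ v) (u @ [(i, ov, s), (i, \<not> ov, s)] @ v)"
| R2: "i \<noteq> j \<Longrightarrow> i \<notin> labels (b @ c) \<Longrightarrow> j \<notin> labels (b @ c) \<Longrightarrow>
       Q \<in> {[(i, False, s), (j, False, \<not> s)], [(j, False, \<not> s), (i, False, s)]} \<Longrightarrow>
       vmove (b @ c) ([(i, True, s), (j, True, \<not> s)] @ b @ Q @ c)"
| R3a: "distinct [x, y, z] \<Longrightarrow> {x, y, z} \<inter> labels (a @ b @ c @ d) = {} \<Longrightarrow>
       ((sy = sz) = (t = m)) \<Longrightarrow> ((sx = sz) = (t = bo)) \<Longrightarrow>
       vmove (a @ segT t x y sx sy @ b @ segM m x z sx sz @ c @ segB bo y z sy sz @ d)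
             (a @ segT (\<not> t) x y sx sy @ b @ segM (\<not> m) x z sx sz @ c @ segB (\<not> bo) y z sy sz @ d)"
| R3b: "distinct [x, y, z] \<Longrightarrow> {x, y, z} \<inter> labels (a @ b @ c @ d) = {} \<Longrightarrow>
       ((sy = sz) = (t = m)) \<Longrightarrow> ((sx = sz) = (t = bo)) \<Longrightarrow>
       vmove (a @ segT t x y sx sy @ b @ segB bo y z sy sz @ c @ segM m x z sx sz @ d)
             (a @ segT (\<not> t) x y sx sy @ b @ segB (\<not> bo) y z sy sz @ c @ segM (\<not> m) x z sx sz @ d)"

definition vequiv :: "gcode \<Rightarrow> gcode \<Rightarrow> bool" where
  "vequiv = (symclp vmove)\<^sup>*\<^sup>*"

definition crossing_number :: "gcode \<Rightarrow> nat" where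
  "crossing_number K = (LEAST n. \<exists>w. vequiv K w \<and> length w = 2 * n)"

definition max_window :: "gcode \<Rightarrow> nat" where
  "max_window w = Max {k. k \<le> length w \<and> (\<exists>r. distinct (map fst (take k (rotate r w))))}"

datatype side = N | E | S | W

text \<open>T0 blank; T1..T4 single corner arcs; T5 horizontal; T6 vertical;
  T7, T8 double arcs; T9 crossing with horizontal strand over; T10 vertical over.\<close>
datatype tile = T0 | T1 | T2 | T3 | T4 | T5 | T6 | T7 | T8 | T9 | T10

fun conn :: "tile \<Rightarrow> side \<Rightarrow> side option" where
  "conn T0 _ = None"
| "conn T1 N = Some W" | "conn T1 W = Some N" | "conn T1 _ = None"
| "conn T2 N = Some E" | "conn T2 E = Some N" | "conn T2 _ = None"
| "conn T3 E = Some S" | "conn T3 S = Some E" | "conn T3 _ = None"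
| "conn T4 S = Some W" | "conn T4 W = Some S" | "conn T4 _ = None"
| "conn T5 W = Some E" | "conn T5 E = Some W" | "conn T5 _ = None"
| "conn T6 N = Some S" | "conn T6 S = Some N" | "conn T6 _ = None"
| "conn T7 N = Some W" | "conn T7 W = Some N" | "conn T7 E = Some S" | "conn T7 S = Some E"
| "conn T8 N = Some E" | "conn T8 E = Some N" | "conn T8 S = Some W" | "conn T8 W = Some S"
| "conn T9 N = Some S" | "conn T9 S = Some N" | "conn T9 E = Some W" | "conn T9 W = Some E"
| "conn T10 N = Some S" | "conn T10 S = Some N" | "conn T10 E = Some W" | "conn T10 W = Some E"

text \<open>A port (i, j, d): side d of the tile in row i (row 0 on top), column j.\<close>
type_synonym port = "nat \<times> nat \<times> side"

definition in_mosaic :: "nat \<Rightarrow> nat \<Rightarrow> port \<Rightarrow> bool" where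
  "in_mosaic m n p = (case p of (i, j, d) \<Rightarrow> i < m \<and> j < n)"

definition bport :: "nat \<Rightarrow> nat \<Rightarrow> port \<Rightarrow> bool" where
  "bport m n p = (case p of (i, j, d) \<Rightarrow> i < m \<and> j < n \<and>
      (d = N \<and> i = 0 \<or> d = S \<and> i = m - 1 \<or> d = W \<and> j = 0 \<or> d = E \<and> j = n - 1))"

definition across :: "nat \<Rightarrow> nat \<Rightarrow> (port \<Rightarrow> port) \<Rightarrow> port \<Rightarrow> port" where
  "across m n P p = (if bport m n p then P p else
     (case p of (i, j, N) \<Rightarrow> (i - 1, j, S) | (i, j, S) \<Rightarrow> (i + 1, j, N)
              | (i, j, W) \<Rightarrow> (i, j - 1, E) | (i, j, E) \<Rightarrow> (i, j + 1, W)))"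

definition sport :: "nat \<Rightarrow> nat \<Rightarrow> (nat \<Rightarrow> nat \<Rightarrow> tile) \<Rightarrow> port \<Rightarrow> bool" where
  "sport m n T p = (case p of (i, j, d) \<Rightarrow> i < m \<and> j < n \<and> conn (T i j) d \<noteq> None)"

definition link :: "nat \<Rightarrow> nat \<Rightarrow> (nat \<Rightarrow> nat \<Rightarrow> tile) \<Rightarrow> (port \<Rightarrow> port) \<Rightarrow> port \<Rightarrow> port \<Rightarrow> bool" where
  "link m n T P p q = (sport m n T p \<and>
     (q = across m n P p \<or> (case p of (i, j, d) \<Rightarrow> \<exists>d'. conn (T i j) d = Some d' \<and> q = (i, j, d'))))"

text \<open>An m x n virtual rectangular mosaic: tiles T, and a fixed-point-free involutive pairing P
  of the boundary unit edges (glued orientation-reversingly, so the quotient is a closed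
  orientable surface), such that the strands glue to a single closed curve (a knot diagram).\<close>
definition valid_mosaic :: "nat \<Rightarrow> nat \<Rightarrow> (nat \<Rightarrow> nat \<Rightarrow> tile) \<Rightarrow> (port \<Rightarrow> port) \<Rightarrow> bool" where
  "valid_mosaic m n T P \<longleftrightarrow> 0 < m \<and> 0 < n \<and>
     (\<forall>p. bport m n p \<longrightarrow> bport m n (P p) \<and> P p \<noteq> p \<and> P (P p) = p) \<and>
     (\<forall>p. in_mosaic m n p \<longrightarrow> (sport m n T p \<longleftrightarrow> sport m n T (across m n P p))) \<and>
     (\<exists>p. sport m n T p) \<and>
     (\<forall>p q. sport m n T p \<longrightarrow> sport m n T q \<longrightarrow> (link m n T P)\<^sup>*\<^sup>* p q)"

definition step :: "nat \<Rightarrow> nat \<Rightarrow> (nat \<Rightarrow> nat \<Rightarrow> tile) \<Rightarrow> (port \<Rightarrow> port) \<Rightarrow> port \<Rightarrow> port" where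
  "step m n T P p = (case p of (i, j, d) \<Rightarrow> across m n P (i, j, the (conn (T i j) d)))"

definition orbit_len :: "nat \<Rightarrow> nat \<Rightarrow> (nat \<Rightarrow> nat \<Rightarrow> tile) \<Rightarrow> (port \<Rightarrow> port) \<Rightarrow> port \<Rightarrow> nat" where
  "orbit_len m n T P p0 = (LEAST k. 0 < k \<and> (step m n T P ^^ k) p0 = p0)"

definition visits :: "nat \<Rightarrow> nat \<Rightarrow> (nat \<Rightarrow> nat \<Rightarrow> tile) \<Rightarrow> (port \<Rightarrow> port) \<Rightarrow> port \<Rightarrow> port list" where
  "visits m n T P p0 = map (\<lambda>k. (step m n T P ^^ k) p0) [0..<orbit_len m n T P p0]"

text \<open>Sign convention: positive iff cross(dir_over, dir_under) > 0, with the y-axis pointing up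
  (towards row 0).  Entering at W means moving east; entering at S means moving north.\<close>
definition mosaic_code :: "nat \<Rightarrow> nat \<Rightarrow> (nat \<Rightarrow> nat \<Rightarrow> tile) \<Rightarrow> (port \<Rightarrow> port) \<Rightarrow> port \<Rightarrow> gcode" where
  "mosaic_code m n T P p0 =
     (let vs = visits m n T P p0 in
      concat (map (\<lambda>(i, j, d).
        if T i j = T9 \<or> T i j = T10 then
          [(i * n + j,
            (if T i j = T9 then d = E \<or> d = W else d = N \<or> d = S),
            (((i, j, W) \<in> set vs) = ((i, j, S) \<in> set vs)) = (T i j = T9))]
        else []) vs))"

definition mosaic_represents :: "nat \<Rightarrow> nat \<Rightarrow> (nat \<Rightarrow> nat \<Rightarrow> tile) \<Rightarrow> (port \<Rightarrow> port) \<Rightarrow> gcode \<Rightarrow> bool" where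
  "mosaic_represents m n T P K \<longleftrightarrow> valid_mosaic m n T P \<and>
     (\<exists>p0. sport m n T p0 \<and> vequiv (mosaic_code m n T P p0) K)"

definition tile_number :: "gcode \<Rightarrow> nat" where
  "tile_number K = (LEAST t. \<exists>m n T P. t = m * n \<and> mosaic_represents m n T P K)"

definition row_number :: "gcode \<Rightarrow> nat" where
  "row_number K = (LEAST n. \<exists>T P. mosaic_represents 1 n T P K)"

end

theory Submission
  imports Defs
begin


lemma vequiv_sym: "vequiv a b \<Longrightarrow> vequiv b a"
  unfolding vequiv_def by (meson symp_rtranclp_symclp sympD)

lemma vequiv_trans: "vequiv a b \<Longrightarrow> vequiv b c \<Longrightarrow> vequiv a c"
  unfolding vequiv_def by (rule rtranclp_trans)

lemma vmove_vequiv: "vmove a b \<Longrightarrow> vequiv a b"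
  unfolding vequiv_def by (simp add: r_into_rtranclp symclpI)

definition cnt2 :: "gcode \<Rightarrow> bool" where
  "cnt2 w = (\<forall>l. count_list (map fst w) l \<in> {0,2})"

lemma count_list_rotate1: "count_list (rotate1 xs) x = count_list xs x"
  by (cases xs) auto

lemma count_list_rotate: "count_list (rotate k xs) x = count_list xs x"
  by (induction k) (auto simp: count_list_rotate1)

lemma segT_fst: "map fst (segT t x y a b) = (if t then [x,y] else [y,x])"
  by (simp add: segT_def)
lemma segM_fst: "map fst (segM t x y a b) = (if t then [x,y] else [y,x])"
  by (simp add: segM_def)
lemma segB_fst: "map fst (segB t x y a b) = (if t then [x,y] else [y,x])"
  by (simp add: segB_def)

lemma cl_if: "count_list (if t then [x,y] else [y,x]) l = count_list [x,y] l"
  by auto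

lemma vmove_cnt2: "vmove w w' \<Longrightarrow> cnt2 w = cnt2 w'"
proof (induction rule: vmove.induct)
  case (rot w k)
  then show ?case by (simp add: cnt2_def rotate_map[symmetric] count_list_rotate)
next
  case (relabel f w)
  have m: "map fst (map (\<lambda>(l, ov, s). (f l, ov, s)) w) = map f (map fst w)"
    by (induction w) auto
  have eq: "(\<forall>l. count_list (map f (map fst w)) l \<in> {0,2}) = (\<forall>l. count_list (map fst w) l \<in> {0,2})"
  proof
    assume H: "\<forall>l. count_list (map f (map fst w)) l \<in> {0,2}"
    show "\<forall>l. count_list (map fst w) l \<in> {0,2}"
      using H count_list_map_conv[OF relabel] by metis
  next
    assume H: "\<forall>l. count_list (map fst w) l \<in> {0,2}"
    show "\<forall>l. count_list (map f (map fst w)) l \<in> {0,2}"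
    proof
      fix l
      show "count_list (map f (map fst w)) l \<in> {0,2}"
      proof (cases "l \<in> range f")
        case True
        then obtain x where "l = f x" by auto
        then show ?thesis using H count_list_map_conv[OF relabel] by metis
      next
        case False
        then have "l \<notin> set (map f (map fst w))" by auto
        then show ?thesis by simp
      qed
    qed
  qed
  show ?case unfolding cnt2_def m using eq by blast
next
  case (R1 i u v ov s)
  then have "count_list (map fst u) i = 0" "count_list (map fst v) i = 0"
    by (auto simp: labels_def count_list_0_iff)
  then show ?case by (auto simp: cnt2_def)
next
  case (R2 i j b c Q s)
  then have z: "count_list (map fst b) i = 0" "count_list (map fst c) i = 0"
     "count_list (map fst b) j = 0" "count_list (map fst c) j = 0"
    by (auto simp: labels_def count_list_0_iff)
  have q: "count_list (map fst Q) l = count_list [i,j] l" for l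
    using R2(4) by auto
  show ?case unfolding cnt2_def
    using z R2(1) by (auto simp: q)
next
  case (R3a x y z a b c d sy sz t m sx bo)
  then show ?case
    by (simp add: cnt2_def segT_fst segM_fst segB_fst cl_if del: count_list.simps)
next
  case (R3b x y z a b c d sy sz t m sx bo)
  then show ?case
    by (simp add: cnt2_def segT_fst segM_fst segB_fst cl_if del: count_list.simps)
qed

lemma vequiv_cnt2: "vequiv a b \<Longrightarrow> cnt2 a = cnt2 b"
  unfolding vequiv_def
proof (induction rule: rtranclp_induct)
  case base then show ?case by simp
next
  case (step y z)
  then show ?case using vmove_cnt2 by (auto simp: symclp_def)
qed

lemma filter_count: "count_list (map fst w) l = length (filter (\<lambda>e. fst e = l) w)"
  by (induction w) auto

lemma valid_cnt2: "valid_gc w \<Longrightarrow> cnt2 w"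
  unfolding cnt2_def
proof
  fix l assume v: "valid_gc w"
  show "count_list (map fst w) l \<in> {0,2}"
  proof (cases "l \<in> fst ` set w")
    case True
    then obtain s where "filter (\<lambda>e. fst e = l) w \<in> {[(l, True, s), (l, False, s)], [(l, False, s), (l, True, s)]}"
      using v unfolding valid_gc_def by blast
    then show ?thesis by (auto simp: filter_count)
  next
    case False
    then show ?thesis by (simp add: count_list_0_iff)
  qed
qed

lemma cnt2_length: "cnt2 w \<Longrightarrow> length w = 2 * card (fst ` set w)"
proof -
  assume c: "cnt2 w"
  have "length w = length (map fst w)" by simp
  also have "\<dots> = sum (count_list (map fst w)) (set (map fst w))"
    by (rule sum_count_set[symmetric]) auto
  also have "\<dots> = sum (\<lambda>_. 2) (set (map fst w))"
  proof (rule sum.cong)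
    fix x assume "x \<in> set (map fst w)"
    then have "count_list (map fst w) x \<noteq> 0" by (simp add: count_list_0_iff)
    moreover have "count_list (map fst w) x \<in> {0,2}" using c unfolding cnt2_def by blast
    ultimately show "count_list (map fst w) x = 2" by (metis empty_iff insert_iff)
  qed simp
  finally show ?thesis by simp
qed

lemma bport_in: "bport m n p \<Longrightarrow> in_mosaic m n p"
  by (auto simp: bport_def in_mosaic_def split: prod.splits)

lemma across_in:
  assumes "\<forall>p. bport m n p \<longrightarrow> bport m n (P p)" "in_mosaic m n p"
  shows "in_mosaic m n (across m n P p)"
proof (cases "bport m n p")
  case True
  then have "bport m n (P p)" using assms(1) by blast
  then show ?thesis using True by (simp add: across_def bport_in)
next
  case False
  obtain i j d where p: "p = (i,j,d)" by (cases p) auto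
  show ?thesis using False assms(2) unfolding p
    by (cases d) (auto simp: across_def bport_def in_mosaic_def)
qed

lemma step_in:
  assumes "\<forall>p. bport m n p \<longrightarrow> bport m n (P p)" "in_mosaic m n p"
  shows "in_mosaic m n (step m n T P p)"
proof -
  obtain i j d where p: "p = (i,j,d)" by (cases p) auto
  have "in_mosaic m n (i, j, the (conn (T i j) d))" using assms(2) p by (simp add: in_mosaic_def)
  then show ?thesis using across_in[OF assms(1)] p by (simp add: step_def)
qed

lemma funpow_in:
  assumes "\<forall>p. bport m n p \<longrightarrow> bport m n (P p)" "in_mosaic m n p"
  shows "in_mosaic m n ((step m n T P ^^ k) p)"
  by (induction k) (auto simp: assms step_in)

lemma code_labels:
  assumes "valid_mosaic m n T P" "sport m n T p0"
  shows "fst ` set (mosaic_code m n T P p0) \<subseteq> (\<lambda>(i,j). i*n+j) ` ({..<m} \<times> {..<n})"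
proof
  fix x assume "x \<in> fst ` set (mosaic_code m n T P p0)"
  then obtain e where e: "e \<in> set (mosaic_code m n T P p0)" "x = fst e" by auto
  have bp: "\<forall>p. bport m n p \<longrightarrow> bport m n (P p)" using assms(1) by (simp add: valid_mosaic_def)
  have p0: "in_mosaic m n p0" using assms(2) by (auto simp: sport_def in_mosaic_def split: prod.splits)
  from e(1) obtain v where v: "v \<in> set (visits m n T P p0)"
    and ev: "e \<in> set ((\<lambda>(i, j, d).
        if T i j = T9 \<or> T i j = T10 then
          [(i * n + j,
            (if T i j = T9 then d = E \<or> d = W else d = N \<or> d = S),
            (((i, j, W) \<in> set (visits m n T P p0)) = ((i, j, S) \<in> set (visits m n T P p0))) = (T i j = T9))]
        else []) v)"
    unfolding mosaic_code_def Let_def by auto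
  from v obtain k where "v = (step m n T P ^^ k) p0" unfolding visits_def by auto
  then have vin: "in_mosaic m n v" using funpow_in[OF bp p0] by simp
  obtain i j d where vv: "v = (i,j,d)" by (cases v) auto
  have "x = i*n+j" using ev e(2) vv by (auto split: if_splits)
  then show "x \<in> (\<lambda>(i,j). i*n+j) ` ({..<m} \<times> {..<n})" using vin vv by (auto simp: in_mosaic_def)
qed

lemma lower:
  assumes "valid_gc K" "mosaic_represents m n T P K"
  shows "crossing_number K \<le> m * n"
proof -
  obtain p0 where p0: "valid_mosaic m n T P" "sport m n T p0" "vequiv (mosaic_code m n T P p0) K"
    using assms(2) by (auto simp: mosaic_represents_def)
  define c where "c = mosaic_code m n T P p0"
  have "cnt2 c" using vequiv_cnt2[OF p0(3)] valid_cnt2[OF assms(1)] by (simp add: c_def)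
  then have len: "length c = 2 * card (fst ` set c)" by (rule cnt2_length)
  have "card (fst ` set c) \<le> card ((\<lambda>(i,j). i*n+j) ` ({..<m} \<times> {..<n}))"
    using code_labels[OF p0(1,2)] unfolding c_def by (intro card_mono) auto
  also have "\<dots> \<le> card ({..<m} \<times> {..<n})" by (rule card_image_le) auto
  also have "\<dots> = m * n" by (simp add: card_cartesian_product)
  finally have le: "card (fst ` set c) \<le> m * n" .
  have "crossing_number K \<le> card (fst ` set c)"
    unfolding crossing_number_def
    by (rule Least_le) (use len vequiv_sym[OF p0(3)] c_def in auto)
  with le show ?thesis by simp
qed



lemma rtranclp_sym_rel:
  assumes "\<And>x y. r x y \<Longrightarrow> r y x" "r\<^sup>*\<^sup>* a b"
  shows "r\<^sup>*\<^sup>* b a"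
  using assms(2)
proof (induction rule: rtranclp_induct)
  case base then show ?case by simp
next
  case (step y z)
  then show ?case using assms(1) by (meson converse_rtranclp_into_rtranclp)
qed

lemma concat_single: "(\<forall>x\<in>set xs. F x = [g x]) \<Longrightarrow> concat (map F xs) = map g xs"
  by (induction xs) auto

lemma across_across:
  assumes "\<forall>p. bport m n p \<longrightarrow> bport m n (P p) \<and> P (P p) = p" "in_mosaic m n p"
  shows "across m n P (across m n P p) = p"
proof (cases "bport m n p")
  case True
  then have "bport m n (P p)" "P (P p) = p" using assms(1) by blast+
  then show ?thesis using True by (simp add: across_def)
next
  case False
  obtain i j d where p: "p = (i,j,d)" by (cases p) auto
  show ?thesis using False assms(2) unfolding p
    by (cases d) (auto simp: across_def bport_def in_mosaic_def)
qed

fun opp :: "side \<Rightarrow> side" where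
  "opp N = S" | "opp S = N" | "opp W = E" | "opp E = W"

locale rowc =
  fixes n :: nat and \<sigma> :: "nat \<Rightarrow> nat" and ov s :: "nat \<Rightarrow> bool"
  assumes n1: "1 \<le> n" and bij: "bij_betw \<sigma> {..<n} {..<n}"
begin

definition "\<tau> = inv_into {..<n} \<sigma>"
definition "up k = (s (\<sigma> k) = ov (\<sigma> k))"
definition "ent k = ((0::nat), \<sigma> k, if up k then S else N)"
definition "ex k = ((0::nat), \<sigma> k, if up k then N else S)"
definition "TT = (\<lambda>(i::nat) j. if ov j then T9 else T10)"
definition "PP p = (if p = (0, n-1, E) then ent 0 else if p = (0,0,W) then ex (n-1)
   else (case p of (i,j,d) \<Rightarrow> if d = N \<or> d = S then
      (if p = ent (\<tau> j) then (if \<tau> j = 0 then (0,n-1,E) else ex (\<tau> j - 1))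
       else (if \<tau> j = n-1 then (0,0,W) else ent (\<tau> j + 1))) else p))"
definition "e k = (if k < n then (0,k,W) else ent (k-n))"

lemma sig_lt: "k < n \<Longrightarrow> \<sigma> k < n" using bij by (auto simp: bij_betw_def)
lemma tau_sig: "k < n \<Longrightarrow> \<tau> (\<sigma> k) = k" using bij by (simp add: \<tau>_def bij_betw_inv_into_left)
lemma sig_tau: "j < n \<Longrightarrow> \<sigma> (\<tau> j) = j" using bij by (simp add: \<tau>_def bij_betw_inv_into_right)
lemma tau_lt: "j < n \<Longrightarrow> \<tau> j < n"
  using bij unfolding \<tau>_def bij_betw_def by (metis inv_into_into lessThan_iff)
lemma sig_inj: "k < n \<Longrightarrow> k' < n \<Longrightarrow> \<sigma> k = \<sigma> k' \<Longrightarrow> k = k'"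
  using tau_sig by metis

lemma conn_TT: "conn (TT i j) d = Some (opp d)"
  by (cases d) (auto simp: TT_def)

lemma sport_iff: "sport 1 n TT p = in_mosaic 1 n p"
  by (auto simp: sport_def in_mosaic_def conn_TT split: prod.splits)

lemma sport_iff1: "sport (Suc 0) n TT p = in_mosaic (Suc 0) n p"
  using sport_iff by simp

lemma bport_iff: "bport 1 n (i,j,d) = (i = 0 \<and> j < n \<and> (d = N \<or> d = S \<or> d = W \<and> j = 0 \<or> d = E \<and> j = n-1))"
  by (cases d) (auto simp: bport_def)

lemma ent_ne_ex: "k < n \<Longrightarrow> k' < n \<Longrightarrow> ent k \<noteq> ex k'" "k < n \<Longrightarrow> k' < n \<Longrightarrow> ex k' \<noteq> ent k"
  by (auto simp: ent_def ex_def dest: sig_inj)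

lemma bport_iff1: "bport (Suc 0) n (i,j,d) = (i = 0 \<and> j < n \<and> (d = N \<or> d = S \<or> d = W \<and> j = 0 \<or> d = E \<and> j = n-1))"
  using bport_iff by simp

lemma PP_ent: "k < n \<Longrightarrow> PP (ent k) = (if k = 0 then (0,n-1,E) else ex (k-1))"
proof -
  assume k: "k < n"
  obtain d where ed: "ent k = (0, \<sigma> k, d)" "d = N \<or> d = S" by (simp add: ent_def)
  show ?thesis using ed tau_sig[OF k] unfolding PP_def by (cases d) auto
qed

lemma PP_ex: "k < n \<Longrightarrow> PP (ex k) = (if k = n-1 then (0,0,W) else ent (k+1))"
proof -
  assume k: "k < n"
  obtain d where ed: "ex k = (0, \<sigma> k, d)" "d = N \<or> d = S" by (simp add: ex_def)
  have ne: "ex k \<noteq> ent k" using ent_ne_ex k by blast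
  show ?thesis using ed tau_sig[OF k] ne unfolding PP_def by (cases d) auto
qed

lemma PP_E: "PP (0,n-1,E) = ent 0" by (simp add: PP_def)
lemma PP_W: "PP (0,0,W) = ex (n-1)" by (simp add: PP_def)
lemma PP_E1: "PP (0,n - Suc 0,E) = ent 0" using PP_E by simp
lemma PP_W1: "PP (0,0,W) = ex (n - Suc 0)" using PP_W by simp

lemma NS_cases: "j < n \<Longrightarrow> d = N \<or> d = S \<Longrightarrow> (0,j,d) = ent (\<tau> j) \<or> (0,j,d) = ex (\<tau> j)"
  by (auto simp: ent_def ex_def sig_tau)

lemma bport_ent: "k < n \<Longrightarrow> bport 1 n (ent k)" by (simp add: ent_def bport_def sig_lt)
lemma bport_ex: "k < n \<Longrightarrow> bport 1 n (ex k)" by (simp add: ex_def bport_def sig_lt)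

lemma ent_ne: "k < n \<Longrightarrow> ent k \<noteq> (0,n-1,E)" "k < n \<Longrightarrow> ent k \<noteq> (0,0,W)"
  "k < n \<Longrightarrow> ex k \<noteq> (0,n-1,E)" "k < n \<Longrightarrow> ex k \<noteq> (0,0,W)"
  by (auto simp: ent_def ex_def)

lemma ent_ne1: "k < n \<Longrightarrow> ent k \<noteq> (0,n - Suc 0,E)" "k < n \<Longrightarrow> ex k \<noteq> (0,n - Suc 0,E)"
  using ent_ne by auto

lemma ent_ne2: "(0,n - Suc 0,E) \<noteq> ent 0" using ent_ne1 n1 by (metis less_le_trans zero_less_one)

lemma ent_ne3: "(0,0,W) \<noteq> ex k" by (simp add: ex_def)

lemma ent_inj: "k < n \<Longrightarrow> k' < n \<Longrightarrow> ent k = ent k' \<Longrightarrow> k = k'"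
  by (auto simp: ent_def intro: sig_inj)
lemma ex_inj: "k < n \<Longrightarrow> k' < n \<Longrightarrow> ex k = ex k' \<Longrightarrow> k = k'"
  by (auto simp: ex_def intro: sig_inj)

lemma PP_good: "bport 1 n p \<Longrightarrow> bport 1 n (PP p) \<and> PP p \<noteq> p \<and> PP (PP p) = p"
proof -
  assume b: "bport 1 n p"
  obtain i j d where p: "p = (i,j,d)" by (cases p) auto
  have W0: "bport 1 n (0,0,W)" and E0: "bport 1 n (0,n-1,E)" using n1 by (auto simp: bport_def)
  from b p have i0: "i = 0" and jn: "j < n" and dd: "d = N \<or> d = S \<or> d = W \<and> j = 0 \<or> d = E \<and> j = n-1"
    by (auto simp: bport_iff bport_iff1)
  consider "d = W" | "d = E" | "d = N \<or> d = S" using dd by auto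
  then show ?thesis
  proof cases
    case 1
    then have pp: "p = (0,0,W)" using p i0 dd by auto
    have "bport 1 n (ex (n-1))" using bport_ex n1 by simp
    then show ?thesis unfolding pp PP_W using n1
      by (auto simp: PP_ex ent_ne)
  next
    case 2
    then have pp: "p = (0,n-1,E)" using p i0 dd by auto
    have "bport 1 n (ent 0)" "ent 0 \<noteq> (0,n-1,E)" using bport_ent ent_ne n1 by auto
    then show ?thesis unfolding pp PP_E using n1
      by (auto simp: PP_ent)
  next
    case 3
    have tl: "\<tau> j < n" using tau_lt jn by simp
    from NS_cases[OF jn 3] p i0
    consider "p = ent (\<tau> j)" | "p = ex (\<tau> j)" by auto
    then show ?thesis
    proof cases
      case 1
      show ?thesis
      proof (cases "\<tau> j = 0")
        case True
        then show ?thesis unfolding 1 using tl E0 by (auto simp: PP_ent PP_E PP_E1 ent_ne ent_ne1 ent_ne2)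
      next
        case False
        have "\<tau> j - 1 < n" "\<tau> j - 1 \<noteq> n - 1" "\<tau> j - 1 + 1 = \<tau> j" using tl False by auto
        moreover have "bport 1 n (ex (\<tau> j - 1))" using bport_ex tl by simp
        ultimately show ?thesis unfolding 1 using tl False
          by (auto simp: PP_ent PP_ex bport_ex ent_ne_ex)
      qed
    next
      case 2
      show ?thesis
      proof (cases "\<tau> j = n - 1")
        case True
        then show ?thesis unfolding 2 using tl W0 by (auto simp: PP_ex PP_W PP_W1 ent_ne ent_ne1 ent_ne3)
      next
        case False
        have "\<tau> j + 1 < n" using tl False by auto
        moreover have "bport 1 n (ent (\<tau> j + 1))" using bport_ent calculation by simp
        ultimately show ?thesis unfolding 2 using tl False
          by (auto simp: PP_ent PP_ex bport_ent ent_ne_ex)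
      qed
    qed
  qed
qed

lemma PP_bp: "\<forall>p. bport 1 n p \<longrightarrow> bport 1 n (PP p)" using PP_good by blast
lemma PP_inv: "\<forall>p. bport 1 n p \<longrightarrow> bport 1 n (PP p) \<and> PP (PP p) = p" using PP_good by blast

abbreviation "R \<equiv> link 1 n TT PP"

lemma link_sym: "R p q \<Longrightarrow> R q p"
proof -
  assume l: "R p q"
  then have sp: "in_mosaic 1 n p" by (simp add: link_def sport_iff sport_iff1)
  obtain i j d where p: "p = (i,j,d)" by (cases p) auto
  from l consider "q = across 1 n PP p" | "q = (i,j,opp d)" unfolding link_def p by (auto simp: conn_TT)
  then show ?thesis
  proof cases
    case 1
    then have "in_mosaic 1 n q" using across_in[OF PP_bp sp] by simp
    moreover have "p = across 1 n PP q" using 1 across_across[OF PP_inv sp] by simp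
    ultimately show ?thesis by (simp add: link_def sport_iff sport_iff1)
  next
    case 2
    then have "in_mosaic 1 n q" using sp p by (simp add: in_mosaic_def)
    moreover have "opp (opp d) = d" by (cases d) auto
    ultimately show ?thesis using 2 p by (auto simp: link_def sport_iff sport_iff1 conn_TT)
  qed
qed

lemma link_in: "j < n \<Longrightarrow> R (0,j,d) (0,j,opp d)"
  by (simp add: link_def sport_iff sport_iff1 in_mosaic_def conn_TT)

lemma link_across: "in_mosaic 1 n p \<Longrightarrow> R p (across 1 n PP p)"
  by (simp add: link_def sport_iff sport_iff1)

lemma reach_W: "j < n \<Longrightarrow> R\<^sup>*\<^sup>* (0,0,W) (0,j,W)"
proof (induction j)
  case 0 then show ?case by simp
next
  case (Suc j)
  have "R (0,j,W) (0,j,E)" using link_in[of j W] Suc by simp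
  moreover have "R (0,j,E) (0,Suc j,W)"
  proof -
    have l: "R (0,j,E) (across 1 n PP (0,j,E))" by (rule link_across) (use Suc in \<open>simp add: in_mosaic_def\<close>)
    have "across 1 n PP (0,j,E) = (0,Suc j,W)" using Suc(2) by (auto simp: across_def bport_def)
    then show ?thesis using l by simp
  qed
  moreover have "R\<^sup>*\<^sup>* (0,0,W) (0,j,W)" using Suc by simp
  ultimately show ?case by (meson rtranclp.rtrancl_into_rtrancl)
qed

lemma reach_E: "j < n \<Longrightarrow> R\<^sup>*\<^sup>* (0,0,W) (0,j,E)"
  using reach_W link_in[of j W] by (metis opp.simps(3) rtranclp.rtrancl_into_rtrancl)

lemma opp_ent: "ex k = (0, \<sigma> k, opp (snd (snd (ent k))))"
  by (simp add: ent_def ex_def)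

lemma reach_ent: "k < n \<Longrightarrow> R\<^sup>*\<^sup>* (0,0,W) (ent k) \<and> R\<^sup>*\<^sup>* (0,0,W) (ex k)"
proof (induction k)
  case 0
  have "R (0,n-1,E) (ent 0)"
    using link_across[of "(0,n-1,E)"] n1 PP_E by (simp add: in_mosaic_def across_def bport_def)
  then have a: "R\<^sup>*\<^sup>* (0,0,W) (ent 0)" using reach_E[of "n-1"] n1
    by (meson diff_less rtranclp.rtrancl_into_rtrancl zero_less_one less_le_trans)
  have "R (ent 0) (ex 0)" using link_in[of "\<sigma> 0" "if up 0 then S else N"] sig_lt[of 0] n1
    by (cases "up 0") (auto simp: ent_def ex_def)
  then show ?case using a by (meson rtranclp.rtrancl_into_rtrancl)
next
  case (Suc k)
  then have ih: "R\<^sup>*\<^sup>* (0,0,W) (ex k)" by simp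
  have "k \<noteq> n - 1" using Suc by simp
  then have "R (ex k) (ent (Suc k))"
    using link_across[of "ex k"] Suc bport_ex[of k] PP_ex[of k] bport_in
    by (simp add: across_def)
  then have a: "R\<^sup>*\<^sup>* (0,0,W) (ent (Suc k))" using ih by (meson rtranclp.rtrancl_into_rtrancl)
  have "R (ent (Suc k)) (ex (Suc k))" using link_in[of "\<sigma> (Suc k)" "if up (Suc k) then S else N"] sig_lt[of "Suc k"] Suc
    by (cases "up (Suc k)") (auto simp: ent_def ex_def)
  then show ?case using a by (meson rtranclp.rtrancl_into_rtrancl)
qed

lemma reach_all: "in_mosaic 1 n p \<Longrightarrow> R\<^sup>*\<^sup>* (0,0,W) p"
proof -
  assume a: "in_mosaic 1 n p"
  obtain i j d where p: "p = (i,j,d)" by (cases p) auto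
  have i: "i = 0" and j: "j < n" using a p by (auto simp: in_mosaic_def)
  consider "d = W" | "d = E" | "d = N \<or> d = S" by (cases d) auto
  then show ?thesis
  proof cases
    case 1 then show ?thesis using reach_W j p i by simp
  next
    case 2 then show ?thesis using reach_E j p i by simp
  next
    case 3
    then show ?thesis using NS_cases[OF j 3] reach_ent[OF tau_lt[OF j]] p i by auto
  qed
qed

lemma reach_all1: "in_mosaic (Suc 0) n p \<Longrightarrow> R\<^sup>*\<^sup>* (0,0,W) p"
  using reach_all by simp

lemma valid: "valid_mosaic 1 n TT PP"
  unfolding valid_mosaic_def
proof (intro conjI allI impI)
  show "0 < (1::nat)" by simp
  show "0 < n" using n1 by simp
  fix p assume "bport 1 n p"
  then show "bport 1 n (PP p)" "PP p \<noteq> p" "PP (PP p) = p" using PP_good by auto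
next
  fix p assume "in_mosaic 1 n p"
  then show "sport 1 n TT p = sport 1 n TT (across 1 n PP p)"
    using across_in[OF PP_bp] by (simp add: sport_iff sport_iff1)
next
  show "\<exists>p. sport 1 n TT p" using n1 by (intro exI[of _ "(0,0,W)"]) (simp add: sport_iff sport_iff1 in_mosaic_def)
next
  fix p q assume "sport 1 n TT p" "sport 1 n TT q"
  then have "in_mosaic 1 n p" "in_mosaic 1 n q" using sport_iff by blast+
  then have "R\<^sup>*\<^sup>* (0,0,W) p" "R\<^sup>*\<^sup>* (0,0,W) q" using reach_all by blast+
  then show "R\<^sup>*\<^sup>* p q" using rtranclp_sym_rel[of R, OF link_sym] by (meson rtranclp_trans)
qed

end


context rowc
begin

abbreviation "stp \<equiv> step 1 n TT PP"

lemma step_ent: "k < n \<Longrightarrow> stp (ent k) = PP (ex k)"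
proof -
  assume k: "k < n"
  have "stp (ent k) = across 1 n PP (ex k)"
    by (cases "up k") (simp_all add: step_def ent_def ex_def conn_TT)
  moreover have "bport 1 n (ex k)" using bport_ex[OF k] .
  ultimately show ?thesis unfolding across_def by simp
qed

lemma step_W: "k < n \<Longrightarrow> stp (0,k,W) = across 1 n PP (0,k,E)"
  by (simp add: step_def conn_TT)

lemma e0: "e 0 = (0,0,W)" using n1 by (simp add: e_def)

lemma step_e: "k < 2*n \<Longrightarrow> stp (e k) = (if k = 2*n - 1 then e 0 else e (Suc k))"
proof -
  assume k: "k < 2*n"
  show ?thesis
  proof (cases "k < n")
    case True
    then have ek: "e k = (0,k,W)" by (simp add: e_def)
    show ?thesis
    proof (cases "k = n - 1")
      case True
      have "across 1 n PP (0,k,E) = PP (0,n-1,E)" using True \<open>k<n\<close> by (simp add: across_def bport_def)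
      also have "\<dots> = ent 0" by (rule PP_E)
      also have "\<dots> = e (Suc k)" using True n1 by (simp add: e_def)
      finally show ?thesis using ek step_W[OF \<open>k<n\<close>] True n1 by auto
    next
      case False
      have "across 1 n PP (0,k,E) = (0, Suc k, W)" using False \<open>k<n\<close> by (auto simp: across_def bport_def)
      also have "\<dots> = e (Suc k)" using False \<open>k<n\<close> by (auto simp: e_def)
      finally show ?thesis using ek step_W[OF \<open>k<n\<close>] False \<open>k<n\<close> by auto
    qed
  next
    case False
    define k' where "k' = k - n"
    have k': "k' < n" "k = n + k'" using k False by (auto simp: k'_def)
    have ek: "e k = ent k'" using False by (simp add: e_def k'_def)
    have st: "stp (e k) = PP (ex k')" using ek step_ent[OF k'(1)] by simp
    show ?thesis
    proof (cases "k' = n - 1")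
      case True
      then show ?thesis using st PP_ex[OF k'(1)] k' e0 by auto
    next
      case False
      then have "Suc k - n = k' + 1" "\<not> Suc k < n" using k' by auto
      then show ?thesis using st PP_ex[OF k'(1)] k' False by (auto simp: e_def)
    qed
  qed
qed

lemma iter: "k < 2*n \<Longrightarrow> (stp ^^ k) (e 0) = e k"
proof (induction k)
  case 0 then show ?case by simp
next
  case (Suc k)
  then have "(stp ^^ k) (e 0) = e k" by simp
  then show ?case using step_e[of k] Suc(2) by auto
qed

lemma iter_full: "(stp ^^ (2*n)) (e 0) = e 0"
proof -
  have eq: "2*n = Suc (2*n - 1)" using n1 by simp
  have "(stp ^^ (2*n)) (e 0) = stp ((stp ^^ (2*n-1)) (e 0))" by (subst eq) simp
  also have "\<dots> = stp (e (2*n-1))" using iter[of "2*n-1"] n1 by simp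
  also have "\<dots> = e 0" using step_e[of "2*n-1"] n1 by simp
  finally show ?thesis .
qed

lemma e_ne0: "0 < k \<Longrightarrow> k < 2*n \<Longrightarrow> e k \<noteq> e 0"
  using n1 by (auto simp: e_def ent_def)

lemma orbit: "orbit_len 1 n TT PP (0,0,W) = 2*n"
  unfolding orbit_len_def e0[symmetric]
proof (rule Least_equality)
  show "0 < 2*n \<and> (stp ^^ (2*n)) (e 0) = e 0" using n1 iter_full by simp
next
  fix y assume y: "0 < y \<and> (stp ^^ y) (e 0) = e 0"
  show "2*n \<le> y"
  proof (rule ccontr)
    assume "\<not> 2*n \<le> y"
    then have "y < 2*n" by simp
    then show False using iter[of y] y e_ne0[of y] by auto
  qed
qed

lemma visits: "visits 1 n TT PP (0,0,W) = map e [0..<2*n]"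
  unfolding visits_def orbit unfolding e0[symmetric] using iter by simp

definition "VS = e ` {..<2*n}"

definition "G p = (case p of (i,j,d) \<Rightarrow> (i*n+j, (if TT i j = T9 then d=E \<or> d=W else d=N \<or> d=S),
   (((i,j,W) \<in> VS) = ((i,j,S) \<in> VS)) = (TT i j = T9)))"

lemma code: "mosaic_code 1 n TT PP (0,0,W) = map (\<lambda>k. G (e k)) [0..<2*n]"
proof -
  have s: "set (map e [0..<2*n]) = VS" by (auto simp: VS_def)
  show ?thesis
    unfolding mosaic_code_def Let_def visits s
    by (subst concat_single[where g = G]) (auto simp: G_def TT_def split: prod.splits)
qed

lemma memW: "j < n \<Longrightarrow> (0,j,W) \<in> VS"
proof -
  assume j: "j < n"
  then have "e j = (0,j,W)" by (simp add: e_def)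
  then show ?thesis using j unfolding VS_def by (metis image_eqI lessThan_iff less_le_trans mult_2 le_add1)
qed

lemma memS: "j < n \<Longrightarrow> ((0,j,S) \<in> VS) = (s j = ov j)"
proof
  assume j: "j < n" and m: "(0,j,S) \<in> VS"
  then obtain k where k: "k < 2*n" "e k = (0,j,S)" unfolding VS_def by auto
  then have "\<not> k < n" by (auto simp: e_def)
  then have "ent (k-n) = (0,j,S)" using k by (simp add: e_def)
  then have "\<sigma> (k-n) = j" "up (k-n)" by (auto simp: ent_def split: if_splits)
  then show "s j = ov j" by (auto simp: up_def)
next
  assume j: "j < n" and h: "s j = ov j"
  have t: "\<tau> j < n" "\<sigma> (\<tau> j) = j" using tau_lt[OF j] sig_tau[OF j] by auto
  have "e (n + \<tau> j) = ent (\<tau> j)" by (simp add: e_def)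
  also have "\<dots> = (0,j,S)" using t h by (simp add: ent_def up_def)
  finally show "(0,j,S) \<in> VS" unfolding VS_def using t(1) by (metis add_less_cancel_left image_eqI lessThan_iff mult_2)
qed

lemma G_W: "j < n \<Longrightarrow> G (0,j,W) = (j, ov j, s j)"
  using memW[of j] memS[of j] by (auto simp: G_def TT_def)

lemma G_ent: "k < n \<Longrightarrow> G (ent k) = (\<sigma> k, \<not> ov (\<sigma> k), s (\<sigma> k))"
  using memW[of "\<sigma> k"] memS[of "\<sigma> k"] sig_lt[of k]
  by (cases "up k") (auto simp: G_def TT_def ent_def)

lemma code_eq: "mosaic_code 1 n TT PP (0,0,W) =
   map (\<lambda>j. (j, ov j, s j)) [0..<n] @ map (\<lambda>k. (\<sigma> k, \<not> ov (\<sigma> k), s (\<sigma> k))) [0..<n]"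
  unfolding code
proof (rule nth_equalityI)
  fix k assume "k < length (map (\<lambda>k. G (e k)) [0..<2 * n])"
  then have k: "k < 2*n" by simp
  show "map (\<lambda>k. G (e k)) [0..<2 * n] ! k =
     (map (\<lambda>j. (j, ov j, s j)) [0..<n] @ map (\<lambda>k. (\<sigma> k, \<not> ov (\<sigma> k), s (\<sigma> k))) [0..<n]) ! k"
  proof (cases "k < n")
    case True
    then show ?thesis using k G_W[of k] by (simp add: nth_append e_def)
  next
    case False
    then have "k - n < n" using k by simp
    then show ?thesis using k G_ent[of "k-n"] False by (simp add: nth_append e_def)
  qed
qed simp

lemma row_ok: "valid_mosaic 1 n TT PP \<and> sport 1 n TT (0,0,W) \<and>
   mosaic_code 1 n TT PP (0,0,W) =
   map (\<lambda>j. (j, ov j, s j)) [0..<n] @ map (\<lambda>k. (\<sigma> k, \<not> ov (\<sigma> k), s (\<sigma> k))) [0..<n]"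
  using valid code_eq n1 sport_iff[of "(0,0,W)"] by (simp add: in_mosaic_def)

end


lemma valid_rotate1: "valid_gc w \<Longrightarrow> valid_gc (rotate1 w)"
proof (cases w)
  case Nil then show "valid_gc w \<Longrightarrow> valid_gc (rotate1 w)" by simp
next
  case (Cons x ys)
  assume v: "valid_gc w"
  show ?thesis unfolding valid_gc_def
  proof
    fix l assume "l \<in> fst ` set (rotate1 w)"
    then have "l \<in> fst ` set w" by simp
    then obtain s where h: "filter (\<lambda>e. fst e = l) w \<in> {[(l, True, s), (l, False, s)], [(l, False, s), (l, True, s)]}"
      using v unfolding valid_gc_def by blast
    have "filter (\<lambda>e. fst e = l) (rotate1 w) \<in> {[(l, True, s), (l, False, s)], [(l, False, s), (l, True, s)]}"
      using h unfolding Cons by (cases "fst x = l") auto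
    then show "\<exists>s. filter (\<lambda>e. fst e = l) (rotate1 w) \<in> {[(l, True, s), (l, False, s)], [(l, False, s), (l, True, s)]}"
      by blast
  qed
qed

lemma valid_rotate: "valid_gc w \<Longrightarrow> valid_gc (rotate r w)"
  by (induction r) (auto simp: valid_rotate1)

lemma count_distinct: "distinct xs \<Longrightarrow> count_list xs x = (if x \<in> set xs then 1 else 0)"
  by (induction xs) auto

lemma distinct_count: "(\<forall>x. count_list xs x \<le> 1) \<Longrightarrow> distinct xs"
proof (induction xs)
  case Nil then show ?case by simp
next
  case (Cons a xs)
  have "\<forall>x. count_list xs x \<le> 1"
  proof
    fix x
    have "count_list xs x \<le> count_list (a#xs) x" by simp
    then show "count_list xs x \<le> 1" using Cons(2) order_trans by blast
  qed
  moreover have "a \<notin> set xs"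
  proof
    assume "a \<in> set xs"
    then have "count_list xs a \<ge> 1" using count_list_0_iff by fastforce
    then show False using Cons(2)[rule_format, of a] by simp
  qed
  ultimately show ?case using Cons by simp
qed

lemma filt1: "distinct (map fst xs) \<Longrightarrow> j < length xs \<Longrightarrow> filter (\<lambda>e. fst e = fst (xs!j)) xs = [xs!j]"
proof (induction xs arbitrary: j)
  case Nil then show ?case by simp
next
  case (Cons x xs)
  show ?case
  proof (cases j)
    case 0
    have "fst x \<notin> fst ` set xs" using Cons(2) by simp
    then have "\<forall>e\<in>set xs. \<not> fst e = fst x" by (metis image_eqI)
    then have "filter (\<lambda>e. fst e = fst x) xs = []" by (simp add: filter_empty_conv)
    then show ?thesis using 0 by simp
  next
    case (Suc j')
    have "fst (xs!j') \<in> fst ` set xs" using Cons(3) Suc by simp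
    moreover have "fst x \<notin> fst ` set xs" using Cons(2) by simp
    ultimately have "fst x \<noteq> fst (xs!j')" by metis
    then show ?thesis using Cons Suc by simp
  qed
qed

lemma window:
  assumes "max_window w = n"
  shows "\<exists>r. distinct (map fst (take n (rotate r w)))"
proof -
  let ?S = "{k. k \<le> length w \<and> (\<exists>r. distinct (map fst (take k (rotate r w))))}"
  have f: "finite ?S" by (rule finite_subset[of _ "{..length w}"]) auto
  have "0 \<in> ?S" by simp
  then have ne: "?S \<noteq> {}" by blast
  have "Max ?S \<in> ?S" using Max_in[OF f ne] .
  then show ?thesis using assms unfolding max_window_def by auto
qed

theorem mainTheorem3:
  fixes K \<omega> :: gcode and n :: nat
  assumes "valid_gc K"
    and "crossing_number K = n"
    and "valid_gc \<omega>" and "vequiv K \<omega>" and "length \<omega> = 2 * n"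
    and "max_window \<omega> = n"
    and "1 \<le> n"
  shows "tile_number K = n \<and> row_number K = n"
proof -
  obtain r where dA: "distinct (map fst (take n (rotate r \<omega>)))" using window[OF assms(6)] by blast
  define w where "w = rotate r \<omega>"
  have lw: "length w = 2*n" using assms(5) by (simp add: w_def)
  have vw: "valid_gc w" using valid_rotate[OF assms(3)] by (simp add: w_def)
  have Kw: "vequiv K w" using vequiv_trans[OF assms(4) vmove_vequiv[OF vmove.rot]] by (simp add: w_def)
  have dA': "distinct (map fst (take n w))" using dA by (simp add: w_def)
  define a where "a j = fst (w!j)" for j
  define ov where "ov j = fst (snd (w!j))" for j
  define s where "s j = snd (snd (w!j))" for j
  define L where "L = fst ` set w"
  have c2: "cnt2 w" using valid_cnt2[OF vw] .
  have cardL: "card L = n" using cnt2_length[OF c2] lw by (simp add: L_def)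
  have lt: "length (take n w) = n" using lw by simp
  have nA: "j < n \<Longrightarrow> map fst (take n w) ! j = a j" for j using lw by (simp add: a_def)
  have setA: "set (map fst (take n w)) = a ` {..<n}"
  proof -
    have "set (map fst (take n w)) = {map fst (take n w) ! i | i. i < n}"
      using lt by (simp add: set_conv_nth)
    also have "\<dots> = (\<lambda>i. map fst (take n w) ! i) ` {..<n}" by auto
    also have "\<dots> = a ` {..<n}" using nA by (intro image_cong) auto
    finally show ?thesis .
  qed
  have AL: "a ` {..<n} = L"
  proof -
    have sub: "set (map fst (take n w)) \<subseteq> L" unfolding L_def by (auto dest: in_set_takeD)
    have "card (set (map fst (take n w))) = n" using distinct_card[OF dA'] lt by simp
    then have "set (map fst (take n w)) = L" using card_subset_eq[OF _ sub] cardL unfolding L_def by auto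
    then show ?thesis using setA by simp
  qed
  have injA: "inj_on a {..<n}"
  proof
    fix x y assume "x \<in> {..<n}" "y \<in> {..<n}" "a x = a y"
    then show "x = y" using nth_eq_iff_index_eq[OF dA', of x y] nA[of x] nA[of y] lt by simp
  qed
  have split: "map fst w = map fst (take n w) @ map fst (drop n w)"
    by (simp add: map_append[symmetric])
  have dB: "distinct (map fst (drop n w))"
  proof (rule distinct_count, rule allI)
    fix l
    show "count_list (map fst (drop n w)) l \<le> 1"
    proof (cases "l \<in> L")
      case True
      have "count_list (map fst w) l \<noteq> 0" using True by (simp add: L_def count_list_0_iff)
      then have "count_list (map fst w) l = 2" using c2 unfolding cnt2_def by (metis empty_iff insert_iff)
      moreover have "count_list (map fst (take n w)) l = 1"
        using count_distinct[OF dA'] True AL setA by simp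
      ultimately show ?thesis using split by (metis count_list_append add_diff_cancel_left' le_refl one_add_one)
    next
      case False
      then have "l \<notin> set (map fst (drop n w))" unfolding L_def by (auto dest: in_set_dropD)
      then show ?thesis by simp
    qed
  qed
  have ld: "length (drop n w) = n" using lw by simp
  define b where "b k = fst (w!(n+k))" for k
  have bL: "k < n \<Longrightarrow> b k \<in> L" for k using lw unfolding b_def L_def by simp
  define \<sigma> where "\<sigma> k = inv_into {..<n} a (b k)" for k
  have sig: "k < n \<Longrightarrow> \<sigma> k < n \<and> a (\<sigma> k) = b k" for k
    using bL[of k] AL unfolding \<sigma>_def by (metis f_inv_into_f inv_into_into lessThan_iff)
  have nB: "k < n \<Longrightarrow> map fst (drop n w) ! k = b k" for k using lw by (simp add: b_def)
  have binj: "k < n \<Longrightarrow> k' < n \<Longrightarrow> b k = b k' \<Longrightarrow> k = k'" for k k'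
    using nth_eq_iff_index_eq[OF dB, of k k'] nB[of k] nB[of k'] ld by simp
  have bij: "bij_betw \<sigma> {..<n} {..<n}"
  proof -
    have i: "inj_on \<sigma> {..<n}" using sig binj by (metis inj_onI lessThan_iff)
    have "\<sigma> ` {..<n} \<subseteq> {..<n}" using sig by auto
    then have "\<sigma> ` {..<n} = {..<n}" using endo_inj_surj[OF _ _ i] by simp
    then show ?thesis using i by (simp add: bij_betw_def)
  qed
  have wj: "w!j = (a j, ov j, s j)" for j by (simp add: a_def ov_def s_def)
  have wB: "w!(n+k) = (a (\<sigma> k), \<not> ov (\<sigma> k), s (\<sigma> k))" if k: "k < n" for k
  proof -
    define j where "j = \<sigma> k"
    have j: "j < n" "a j = b k" using sig[OF k] by (auto simp: j_def)
    define l where "l = a j"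
    have fA: "filter (\<lambda>e. fst e = l) (take n w) = [w!j]"
      using filt1[OF dA', of j] lt j by (simp add: l_def a_def)
    have fB: "filter (\<lambda>e. fst e = l) (drop n w) = [w!(n+k)]"
      using filt1[OF dB, of k] ld k j by (simp add: l_def b_def)
    have "filter (\<lambda>e. fst e = l) w = filter (\<lambda>e. fst e = l) (take n w @ drop n w)" by simp
    also have "\<dots> = [w!j, w!(n+k)]" unfolding filter_append fA fB by simp
    finally have fw: "filter (\<lambda>e. fst e = l) w = [w!j, w!(n+k)]" .
    have "l \<in> fst ` set w" using bL[OF k] j L_def l_def by simp
    then obtain s' where "filter (\<lambda>e. fst e = l) w \<in> {[(l, True, s'), (l, False, s')], [(l, False, s'), (l, True, s')]}"
      using vw unfolding valid_gc_def by blast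
    then have "[w!j, w!(n+k)] \<in> {[(l, True, s'), (l, False, s')], [(l, False, s'), (l, True, s')]}"
      unfolding fw .
    moreover have wjl: "w!j = (l, ov j, s j)" using wj[of j] l_def by simp
    ultimately have "w!(n+k) = (l, \<not> ov j, s j)" by auto
    then show ?thesis using j_def l_def by simp
  qed
  interpret rowc n \<sigma> ov s by unfold_locales (use assms(7) bij in auto)
  define tgt where "tgt = map (\<lambda>j. (j, ov j, s j)) [0..<n] @ map (\<lambda>k. (\<sigma> k, \<not> ov (\<sigma> k), s (\<sigma> k))) [0..<n]"
  have ok: "valid_mosaic 1 n TT PP" "sport 1 n TT (0,0,W)" "mosaic_code 1 n TT PP (0,0,W) = tgt"
    using row_ok by (auto simp: tgt_def)
  define M where "M = Suc (Max (a ` {..<n}))"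
  define g where "g x = (if x < n then a x else x + M)" for x
  have aM: "x < n \<Longrightarrow> a x < M" for x unfolding M_def by (simp add: le_imp_less_Suc)
  have ing: "inj g"
  proof
    fix x y assume "g x = g y"
    show "x = y"
    proof (cases "x < n"; cases "y < n")
      assume "x < n" "y < n"
      then show ?thesis using \<open>g x = g y\<close> injA unfolding g_def inj_on_def by simp
    next
      assume "x < n" "\<not> y < n"
      then show ?thesis using \<open>g x = g y\<close> aM[of x] unfolding g_def by simp
    next
      assume "\<not> x < n" "y < n"
      then show ?thesis using \<open>g x = g y\<close> aM[of y] unfolding g_def by simp
    next
      assume "\<not> x < n" "\<not> y < n"
      then show ?thesis using \<open>g x = g y\<close> unfolding g_def by simp
    qed
  qed
  have mapw: "map (\<lambda>(l, ov, s). (g l, ov, s)) tgt = w"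
  proof (rule nth_equalityI)
    show "length (map (\<lambda>(l, ov, s). (g l, ov, s)) tgt) = length w" using lw by (simp add: tgt_def)
  next
    fix k assume "k < length (map (\<lambda>(l, ov, s). (g l, ov, s)) tgt)"
    then have k: "k < 2*n" by (simp add: tgt_def)
    show "map (\<lambda>(l, ov, s). (g l, ov, s)) tgt ! k = w ! k"
    proof (cases "k < n")
      case True
      then show ?thesis using k wj[of k] by (simp add: tgt_def nth_append g_def)
    next
      case False
      then have k': "k - n < n" "n + (k - n) = k" using k by auto
      have sl: "\<sigma> (k - n) < n" using sig[OF k'(1)] by simp
      have wk: "w ! k = (a (\<sigma> (k-n)), \<not> ov (\<sigma> (k-n)), s (\<sigma> (k-n)))" using wB[OF k'(1)] k'(2) by simp
      show ?thesis using False k'(1) sl wk k by (simp add: tgt_def nth_append g_def)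
    qed
  qed
  have "vequiv tgt w" using vmove_vequiv[OF vmove.relabel[OF ing, of tgt]] mapw by simp
  then have "vequiv K tgt" using vequiv_trans[OF Kw vequiv_sym] by blast
  then have "vequiv tgt K" by (rule vequiv_sym)
  then have Ktgt: "vequiv (mosaic_code 1 n TT PP (0,0,W)) K" using ok(3) by simp
  have rep: "mosaic_represents 1 n TT PP K"
    unfolding mosaic_represents_def using ok Ktgt by blast
  have lowb: "mosaic_represents m n' T P K \<Longrightarrow> n \<le> m * n'" for m n' T P
    using lower[OF assms(1), of m n' T P] assms(2) by simp
  have t: "tile_number K = n"
    unfolding tile_number_def
  proof (rule Least_equality)
    show "\<exists>m n' T P. n = m * n' \<and> mosaic_represents m n' T P K" using rep
      by (intro exI[of _ 1] exI[of _ n] exI[of _ TT] exI[of _ PP]) simp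
  next
    fix y assume "\<exists>m n' T P. y = m * n' \<and> mosaic_represents m n' T P K"
    then obtain m n' T P where "y = m * n'" "mosaic_represents m n' T P K" by blast
    then show "n \<le> y" using lowb by simp
  qed
  have rr: "row_number K = n"
    unfolding row_number_def
  proof (rule Least_equality)
    show "\<exists>T P. mosaic_represents 1 n T P K" using rep by (intro exI[of _ TT] exI[of _ PP])
  next
    fix y assume "\<exists>T P. mosaic_represents 1 y T P K"
    then obtain T P where "mosaic_represents 1 y T P K" by blast
    then show "n \<le> y" using lowb[of 1 y T P] by simp
  qed
  show ?thesis by (rule conjI[OF t rr])
qed


end
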